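(* Let $N=[n]$ and $v:2^N\to\mathbb{R}_+$ be a monotone valuation with $v(\emptyset)=0$. The decision map that, for each $p\in\mathbb{R}^n_+$, chooses the lexicographically first set in $D(v;p)$ is up-consistent; and the decision map that chooses the lexicographically first set among the maximal (with respect to inclusion) sets of $D(v;p)$ is maximal and up-consistent.
   Context: For $p\in\mathbb{R}^n_+$, $p(S)=\sum_{j\in S}p_j$ and $D(v;p)=\arg\max_{S\subseteq N}(v(S)-p(S))$. A decision map is $X:\mathbb{R}^n_+\to2^N$ with $X(p)\in D(v;p)$ for all $p$; it is maximal if for every $p$ there is no $S'\in D(v;p)$ with $X(p)\subsetneq S'$. "Lexicographically first" refers to a fixed lexicographic total order on subsets of $N$. A decision map $X$ is up-consistent if for every price vector $p$ with $X(p)=S$, every $i$ and every $p_i'>p_i$, either $X(p_i',p_{-i})=S$ or $i\notin X(p_i',p_{-i})$. *)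

theory Defs
  imports Complex_Main
begin

text \<open>Ground set N = {0,...,n-1} (i.e. [n] re-indexed from 0). Price vectors are
  functions nat => real; only their values on N matter; p is in R^n_+ iff
  p j >= 0 for all j < n.\<close>

definition price_vec :: "nat \<Rightarrow> (nat \<Rightarrow> real) \<Rightarrow> bool" where
  "price_vec n p \<longleftrightarrow> (\<forall>j<n. 0 \<le> p j)"

definition demand :: "(nat set \<Rightarrow> real) \<Rightarrow> nat \<Rightarrow> (nat \<Rightarrow> real) \<Rightarrow> nat set set" where
  "demand v n p = {S. S \<subseteq> {..<n} \<and>
      (\<forall>T. T \<subseteq> {..<n} \<longrightarrow> v T - sum p T \<le> v S - sum p S)}"

definition decision_map :: "(nat set \<Rightarrow> real) \<Rightarrow> nat \<Rightarrow> ((nat \<Rightarrow> real) \<Rightarrow> nat set) \<Rightarrow> bool" where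
  "decision_map v n X \<longleftrightarrow> (\<forall>p. price_vec n p \<longrightarrow> X p \<in> demand v n p)"

definition maximal_dm :: "(nat set \<Rightarrow> real) \<Rightarrow> nat \<Rightarrow> ((nat \<Rightarrow> real) \<Rightarrow> nat set) \<Rightarrow> bool" where
  "maximal_dm v n X \<longleftrightarrow>
     (\<forall>p. price_vec n p \<longrightarrow> \<not> (\<exists>S' \<in> demand v n p. X p \<subset> S'))"

definition up_consistent :: "nat \<Rightarrow> ((nat \<Rightarrow> real) \<Rightarrow> nat set) \<Rightarrow> bool" where
  "up_consistent n X \<longleftrightarrow>
     (\<forall>p. price_vec n p \<longrightarrow> (\<forall>i<n. \<forall>q. p i < q \<longrightarrow>
        X (p(i := q)) = X p \<or> i \<notin> X (p(i := q))))"

text \<open>Fixed lexicographic order on (finite) subsets: compare characteristic vectors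
  lexicographically, coordinate 0 first, with 1 preceding 0; i.e. A precedes B iff
  the least element of the symmetric difference lies in A.\<close>
definition lex_le :: "nat set \<Rightarrow> nat set \<Rightarrow> bool" where
  "lex_le A B \<longleftrightarrow> A = B \<or> Min ((A - B) \<union> (B - A)) \<in> A"

definition lex_first :: "nat set set \<Rightarrow> nat set" where
  "lex_first F = (THE A. A \<in> F \<and> (\<forall>B\<in>F. lex_le A B))"

definition maximal_sets :: "nat set set \<Rightarrow> nat set set" where
  "maximal_sets F = {S \<in> F. \<not> (\<exists>S'\<in>F. S \<subset> S')}"

end

theory Submission
  imports Defs
begin

lemma lex_le_char:
  assumes "finite A" "finite B"
  shows "lex_le A B \<longleftrightarrow> A = B \<or> (\<exists>k\<in>A. k \<notin> B \<and> (\<forall>j<k. j \<in> A \<longleftrightarrow> j \<in> B))"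
proof
  assume "lex_le A B"
  show "A = B \<or> (\<exists>k\<in>A. k \<notin> B \<and> (\<forall>j<k. j \<in> A \<longleftrightarrow> j \<in> B))"
  proof (cases "A = B")
    case False
    let ?D = "(A - B) \<union> (B - A)"
    have fin: "finite ?D" using assms by auto
    have ne: "?D \<noteq> {}" using False by auto
    have m: "Min ?D \<in> A" using \<open>lex_le A B\<close> False unfolding lex_le_def by auto
    have mD: "Min ?D \<in> ?D" using Min_in[OF fin ne] .
    have "\<forall>j<Min ?D. j \<in> A \<longleftrightarrow> j \<in> B"
    proof (intro allI impI)
      fix j assume "j < Min ?D"
      then have "j \<notin> ?D" using Min_le[OF fin] by force
      then show "j \<in> A \<longleftrightarrow> j \<in> B" by auto
    qed
    then show ?thesis using m mD by auto
  qed simp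
next
  assume h: "A = B \<or> (\<exists>k\<in>A. k \<notin> B \<and> (\<forall>j<k. j \<in> A \<longleftrightarrow> j \<in> B))"
  show "lex_le A B"
  proof (cases "A = B")
    case True then show ?thesis unfolding lex_le_def by simp
  next
    case False
    then obtain k where k: "k \<in> A" "k \<notin> B" "\<forall>j<k. j \<in> A \<longleftrightarrow> j \<in> B" using h by blast
    let ?D = "(A - B) \<union> (B - A)"
    have fin: "finite ?D" using assms by auto
    have "Min ?D = k"
    proof (rule Min_eqI[OF fin])
      fix y assume "y \<in> ?D" then show "k \<le> y" using k(3) by (meson DiffE UnE not_le)
    next
      show "k \<in> ?D" using k by auto
    qed
    then show ?thesis unfolding lex_le_def using k by auto
  qed
qed

lemma lex_le_refl: "lex_le A A" unfolding lex_le_def by simp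

lemma lex_le_total:
  assumes "finite A" "finite B"
  shows "lex_le A B \<or> lex_le B A"
proof (cases "A = B")
  case False
  let ?D = "(A - B) \<union> (B - A)"
  have fin: "finite ?D" using assms by auto
  have ne: "?D \<noteq> {}" using False by auto
  have "Min ?D \<in> ?D" using Min_in[OF fin ne] .
  moreover have "(B - A) \<union> (A - B) = ?D" by auto
  ultimately show ?thesis unfolding lex_le_def by auto
qed (simp add: lex_le_refl)

lemma lex_le_antisym:
  assumes "finite A" "finite B" "lex_le A B" "lex_le B A"
  shows "A = B"
proof (rule ccontr)
  assume ne: "A \<noteq> B"
  obtain k where k: "k \<in> A" "k \<notin> B" "\<forall>j<k. j \<in> A \<longleftrightarrow> j \<in> B"
    using assms lex_le_char ne by blast
  obtain l where l: "l \<in> B" "l \<notin> A" "\<forall>j<l. j \<in> B \<longleftrightarrow> j \<in> A"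
    using assms lex_le_char ne by metis
  show False
  proof (cases k l rule: linorder_cases)
    case less then show ?thesis using k l by blast
  next
    case equal then show ?thesis using k l by blast
  next
    case greater then show ?thesis using k l by blast
  qed
qed

lemma lex_le_trans:
  assumes "finite A" "finite B" "finite C" "lex_le A B" "lex_le B C"
  shows "lex_le A C"
proof (cases "A = B \<or> B = C")
  case True then show ?thesis using assms by auto
next
  case False
  obtain k where k: "k \<in> A" "k \<notin> B" "\<forall>j<k. j \<in> A \<longleftrightarrow> j \<in> B"
    using assms lex_le_char False by blast
  obtain l where l: "l \<in> B" "l \<notin> C" "\<forall>j<l. j \<in> B \<longleftrightarrow> j \<in> C"
    using assms lex_le_char False by blast
  have "\<exists>m\<in>A. m \<notin> C \<and> (\<forall>j<m. j \<in> A \<longleftrightarrow> j \<in> C)"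
  proof (cases k l rule: linorder_cases)
    case less
    then show ?thesis using k l by (intro bexI[of _ k]) auto
  next
    case equal then show ?thesis using k l by blast
  next
    case greater
    then show ?thesis using k l by (intro bexI[of _ l]) auto
  qed
  then show ?thesis using lex_le_char[OF assms(1,3)] by blast
qed

lemma lex_first_exists:
  assumes "finite F" "F \<noteq> {}" "\<forall>A\<in>F. finite A"
  shows "\<exists>A\<in>F. \<forall>B\<in>F. lex_le A B"
  using assms
proof (induction F rule: finite_ne_induct)
  case (singleton x) then show ?case by (simp add: lex_le_refl)
next
  case (insert x F)
  then obtain m where m: "m \<in> F" "\<forall>B\<in>F. lex_le m B" by auto
  have fx: "finite x" "finite m" using insert m by auto
  show ?case
  proof (cases "lex_le x m")
    case True
    have "\<forall>B\<in>F. lex_le x B" using m True insert.prems fx lex_le_trans by blast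
    then show ?thesis by (auto simp: lex_le_refl)
  next
    case False
    then have "lex_le m x" using lex_le_total fx by blast
    then show ?thesis using m by (intro bexI[of _ m]) auto
  qed
qed

lemma lex_first_eq:
  assumes "\<forall>A\<in>F. finite A" "A \<in> F" "\<forall>B\<in>F. lex_le A B"
  shows "lex_first F = A"
  unfolding lex_first_def
proof (rule the_equality)
  show "A \<in> F \<and> (\<forall>B\<in>F. lex_le A B)" using assms by auto
next
  fix A' assume "A' \<in> F \<and> (\<forall>B\<in>F. lex_le A' B)"
  then show "A' = A" using assms lex_le_antisym by blast
qed

lemma lex_first_prop:
  assumes "finite F" "F \<noteq> {}" "\<forall>A\<in>F. finite A"
  shows "lex_first F \<in> F \<and> (\<forall>B\<in>F. lex_le (lex_first F) B)"
proof -
  obtain A where "A \<in> F" "\<forall>B\<in>F. lex_le A B" using lex_first_exists[OF assms] by blast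
  then show ?thesis using lex_first_eq[OF assms(3)] by simp
qed

lemma lex_first_sub:
  assumes "finite F" "F \<noteq> {}" "\<forall>A\<in>F. finite A" "G \<subseteq> F" "lex_first F \<in> G"
  shows "lex_first G = lex_first F"
proof -
  have "\<forall>A\<in>G. finite A" using assms by auto
  moreover have "\<forall>B\<in>G. lex_le (lex_first F) B" using lex_first_prop[OF assms(1-3)] assms(4) by auto
  ultimately show ?thesis using lex_first_eq assms(5) by blast
qed

lemma demand_sub: "demand v n p \<subseteq> Pow {..<n}"
  unfolding demand_def by auto

lemma demand_fin: "finite (demand v n p)"
  by (rule finite_subset[OF demand_sub]) simp

lemma demand_elem_fin: "\<forall>A\<in>demand v n p. finite A"
  unfolding demand_def using finite_subset by blast

lemma demand_ne: "demand v n p \<noteq> {}"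
proof -
  let ?f = "\<lambda>S. v S - sum p S"
  let ?P = "Pow {..<n::nat}"
  have fin: "finite (?f ` ?P)" by simp
  have ne: "?f ` ?P \<noteq> {}" by blast
  obtain S where S: "S \<in> ?P" "?f S = Max (?f ` ?P)" using Max_in[OF fin ne] by auto
  have "\<forall>T. T \<subseteq> {..<n} \<longrightarrow> v T - sum p T \<le> v S - sum p S"
  proof (intro allI impI)
    fix T assume "T \<subseteq> {..<n}"
    then have "?f T \<in> ?f ` ?P" by blast
    then have "?f T \<le> Max (?f ` ?P)" by (rule Max_ge[OF fin])
    then show "v T - sum p T \<le> v S - sum p S" using S(2) by simp
  qed
  then have "S \<in> demand v n p"
    unfolding demand_def using S(1) by blast
  then show ?thesis by blast
qed

lemma max_sets_sub: "maximal_sets F \<subseteq> F" unfolding maximal_sets_def by auto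

lemma max_sets_ne:
  assumes "finite (F :: nat set set)" "F \<noteq> {}"
  shows "maximal_sets F \<noteq> {}"
proof -
  obtain m where "m \<in> F" "\<forall>b\<in>F. m \<le> b \<longrightarrow> m = b" using finite_has_maximal[OF assms] by blast
  then have "m \<in> maximal_sets F" unfolding maximal_sets_def by auto
  then show ?thesis by blast
qed

lemma sum_upd:
  fixes p :: "nat \<Rightarrow> real"
  assumes "finite T"
  shows "sum (p(i := q)) T = sum p T + (if i \<in> T then q - p i else 0)"
proof (cases "i \<in> T")
  case True
  have e1: "sum (p(i := q)) T = (p(i := q)) i + sum (p(i := q)) (T - {i})" by (rule sum.remove[OF assms True])
  have e2: "sum (p(i := q)) (T - {i}) = sum p (T - {i})" by (rule sum.cong) auto
  have e3: "sum p T = p i + sum p (T - {i})" by (rule sum.remove[OF assms True])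
  have "sum (p(i := q)) T = q + sum p (T - {i})" using e1 e2 by simp
  then show ?thesis using e3 True by simp
next
  case False
  then have "sum (p(i := q)) T = sum p T" by (intro sum.cong) auto
  then show ?thesis using False by simp
qed

lemma demand_shift:
  assumes "p i < q" "S' \<in> demand v n (p(i := q))" "i \<in> S'"
  shows "demand v n p = {T \<in> demand v n (p(i := q)). i \<in> T}"
proof -
  let ?p' = "p(i := q)"
  define d where "d = q - p i"
  have d: "d > 0" using assms unfolding d_def by simp
  have sh: "\<And>T. T \<subseteq> {..<n} \<Longrightarrow> sum ?p' T = sum p T + (if i \<in> T then d else 0)"
  proof -
    fix T :: "nat set" assume "T \<subseteq> {..<n}"
    then have "finite T" using finite_subset by blast
    then show "sum ?p' T = sum p T + (if i \<in> T then d else 0)" unfolding d_def by (rule sum_upd)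
  qed
  have S'N: "S' \<subseteq> {..<n}" and S'opt: "\<And>T. T \<subseteq> {..<n} \<Longrightarrow> v T - sum ?p' T \<le> v S' - sum ?p' S'"
    using assms(2) unfolding demand_def by auto
  have S'p: "\<And>T. T \<subseteq> {..<n} \<Longrightarrow> v T - sum p T \<le> v S' - sum p S'"
  proof -
    fix T assume T: "T \<subseteq> {..<n}"
    have "v T - sum ?p' T \<le> v S' - sum ?p' S'" using S'opt T .
    then show "v T - sum p T \<le> v S' - sum p S'" using sh[OF T] sh[OF S'N] assms(3) d
      by (cases "i \<in> T"; simp; linarith)
  qed
  show ?thesis
  proof (intro equalityI subsetI)
    fix T assume "T \<in> demand v n p"
    then have TN: "T \<subseteq> {..<n}" and Topt: "\<And>R. R \<subseteq> {..<n} \<Longrightarrow> v R - sum p R \<le> v T - sum p T"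
      unfolding demand_def by auto
    have iT: "i \<in> T"
    proof (rule ccontr)
      assume "i \<notin> T"
      have "v T - sum ?p' T \<le> v S' - sum ?p' S'" using S'opt TN .
      moreover have "v S' - sum p S' \<le> v T - sum p T" using Topt S'N .
      ultimately show False using sh[OF TN] sh[OF S'N] \<open>i \<notin> T\<close> assms(3) d by simp
    qed
    have "\<forall>R. R \<subseteq> {..<n} \<longrightarrow> v R - sum ?p' R \<le> v T - sum ?p' T"
    proof (intro allI impI)
      fix R assume RN: "R \<subseteq> {..<n}"
      have a: "v R - sum p R \<le> v T - sum p T" using Topt RN .
      have b: "v R - sum ?p' R \<le> v S' - sum ?p' S'" using S'opt RN .
      have c: "v S' - sum p S' \<le> v T - sum p T" using Topt S'N .
      show "v R - sum ?p' R \<le> v T - sum ?p' T"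
        using a b c sh[OF RN] sh[OF TN] sh[OF S'N] iT assms(3) d by (cases "i \<in> T"; cases "i \<in> R"; simp; linarith)
    qed
    then show "T \<in> {T \<in> demand v n ?p'. i \<in> T}" using TN iT unfolding demand_def by auto
  next
    fix T assume "T \<in> {T \<in> demand v n ?p'. i \<in> T}"
    then have TN: "T \<subseteq> {..<n}" and iT: "i \<in> T"
      and Topt: "\<And>R. R \<subseteq> {..<n} \<Longrightarrow> v R - sum ?p' R \<le> v T - sum ?p' T"
      unfolding demand_def by auto
    have "\<forall>R. R \<subseteq> {..<n} \<longrightarrow> v R - sum p R \<le> v T - sum p T"
    proof (intro allI impI)
      fix R assume RN: "R \<subseteq> {..<n}"
      have a: "v R - sum ?p' R \<le> v T - sum ?p' T" using Topt RN .
      show "v R - sum p R \<le> v T - sum p T"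
        using a sh[OF RN] sh[OF TN] iT d by (cases "i \<in> T"; cases "i \<in> R"; simp; linarith)
    qed
    then show "T \<in> demand v n p" using TN unfolding demand_def by auto
  qed
qed

lemma max_shift:
  assumes "D = {T \<in> D'. i \<in> T}"
  shows "maximal_sets D = {T \<in> maximal_sets D'. i \<in> T}"
  using assms unfolding maximal_sets_def by auto

theorem mainTheorem10:
  fixes v :: "nat set \<Rightarrow> real" and n :: nat
  assumes mono: "\<And>A B. A \<subseteq> B \<Longrightarrow> B \<subseteq> {..<n} \<Longrightarrow> v A \<le> v B"
    and nonneg: "\<And>S. S \<subseteq> {..<n} \<Longrightarrow> 0 \<le> v S"
    and empty: "v {} = 0"
  shows "decision_map v n (\<lambda>p. lex_first (demand v n p))
       \<and> up_consistent n (\<lambda>p. lex_first (demand v n p))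
       \<and> decision_map v n (\<lambda>p. lex_first (maximal_sets (demand v n p)))
       \<and> maximal_dm v n (\<lambda>p. lex_first (maximal_sets (demand v n p)))
       \<and> up_consistent n (\<lambda>p. lex_first (maximal_sets (demand v n p)))"
proof -
  have P1: "\<And>p. lex_first (demand v n p) \<in> demand v n p"
    using lex_first_prop[OF demand_fin demand_ne demand_elem_fin] by blast
  have mfin: "\<And>p. finite (maximal_sets (demand v n p))"
    using max_sets_sub demand_fin finite_subset by blast
  have mne: "\<And>p. maximal_sets (demand v n p) \<noteq> {}"
    using max_sets_ne[OF demand_fin demand_ne] by blast
  have mef: "\<And>p. \<forall>A\<in>maximal_sets (demand v n p). finite A"
    using max_sets_sub demand_elem_fin by blast
  have P2: "\<And>p. lex_first (maximal_sets (demand v n p)) \<in> maximal_sets (demand v n p)"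
    using lex_first_prop[OF mfin mne mef] by blast
  have A1: "decision_map v n (\<lambda>p. lex_first (demand v n p))"
    unfolding decision_map_def using P1 by blast
  have A3: "decision_map v n (\<lambda>p. lex_first (maximal_sets (demand v n p)))"
    unfolding decision_map_def using P2 max_sets_sub by blast
  have A4: "maximal_dm v n (\<lambda>p. lex_first (maximal_sets (demand v n p)))"
    unfolding maximal_dm_def using P2 unfolding maximal_sets_def by blast
  have A2: "up_consistent n (\<lambda>p. lex_first (demand v n p))"
    unfolding up_consistent_def
  proof (intro allI impI)
    fix p i q assume "price_vec n p" "i < n" "p i < q"
    let ?S' = "lex_first (demand v n (p(i := q)))"
    show "lex_first (demand v n (p(i := q))) = lex_first (demand v n p) \<or> i \<notin> ?S'"
    proof (cases "i \<in> ?S'")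
      case True
      have eq: "demand v n p = {T \<in> demand v n (p(i := q)). i \<in> T}"
        using demand_shift[where p=p and i=i and q=q, OF \<open>p i < q\<close> P1 True] .
      have "lex_first (demand v n p) = ?S'" unfolding eq
        by (rule lex_first_sub[OF demand_fin demand_ne demand_elem_fin]) (use P1 True in auto)
      then show ?thesis by simp
    qed simp
  qed
  have A5: "up_consistent n (\<lambda>p. lex_first (maximal_sets (demand v n p)))"
    unfolding up_consistent_def
  proof (intro allI impI)
    fix p i q assume "price_vec n p" "i < n" "p i < q"
    let ?S' = "lex_first (maximal_sets (demand v n (p(i := q))))"
    show "?S' = lex_first (maximal_sets (demand v n p)) \<or> i \<notin> ?S'"
    proof (cases "i \<in> ?S'")
      case True
      have "?S' \<in> demand v n (p(i := q))" using P2 max_sets_sub by blast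
      then have eq: "demand v n p = {T \<in> demand v n (p(i := q)). i \<in> T}"
        using True by (rule demand_shift[where p=p and i=i and q=q, OF \<open>p i < q\<close>])
      have eq2: "maximal_sets (demand v n p) = {T \<in> maximal_sets (demand v n (p(i := q))). i \<in> T}"
        using max_shift[OF eq] .
      have "lex_first (maximal_sets (demand v n p)) = ?S'" unfolding eq2
        by (rule lex_first_sub[OF mfin mne mef]) (use P2 True in auto)
      then show ?thesis by simp
    qed simp
  qed
  show ?thesis using A1 A2 A3 A4 A5 by blast
qed

end
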